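(* Let $n\ge 2$, fix $\boldsymbol{\rho}^0\in\mathcal{P}_n$ and $\alpha>0$, and let $\mathbf{R}^1,\mathbf{R}^2,\dots$ be independent rankings, each distributed as $\mathrm{Mallows}(\boldsymbol{\rho}^0,\alpha)$ with the footrule distance. Then as $N\to\infty$, $$\mathrm{rank}\Big(\tfrac{1}{N}\sum_{j=1}^{N}R^j_1,\dots,\tfrac{1}{N}\sum_{j=1}^{N}R^j_n\Big)\to \mathrm{rank}\big(\mathbb{E}[R_1\mid\boldsymbol{\rho}^0,\alpha],\dots,\mathbb{E}[R_n\mid\boldsymbol{\rho}^0,\alpha]\big)=\boldsymbol{\rho}^0,$$ where $\mathbf{R}=(R_1,\dots,R_n)\sim\mathrm{Mallows}(\boldsymbol{\rho}^0,\alpha)$.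
   Context: $\mathcal{P}_n$ denotes the set of permutations of $\{1,\dots,n\}$; a ranking $\mathbf{r}\in\mathcal{P}_n$ assigns rank $r_i$ to item $i$. The footrule distance is $d(\mathbf{r},\boldsymbol{\rho})=\sum_{i=1}^n|r_i-\rho_i|$. The Mallows distribution $\mathrm{Mallows}(\boldsymbol{\rho}^0,\alpha)$ on $\mathcal{P}_n$ has probability mass function $P(\mathbf{R}=\mathbf{r}\mid\boldsymbol{\rho}^0,\alpha)=\frac{1}{Z_n(\alpha)}\exp\{-\frac{\alpha}{n}d(\mathbf{r},\boldsymbol{\rho}^0)\}$ with normalizing constant $Z_n(\alpha)$. The rank operator on a real vector $(x_1,\dots,x_n)$ is $\mathrm{rank}(x_1,\dots,x_n)=(r_1,\dots,r_n)$ with $r_i=\sum_{j=1}^n\delta(x_i-x_j)$, where $\delta(x)=1$ if $x\ge 0$ and $\delta(x)=0$ if $x<0$. *)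

theory Defs
  imports "HOL-Probability.Probability" "HOL-Combinatorics.Permutations"
begin

text \<open>Rankings of n items: functions r :: nat => nat with r permutes {1..n};
  r i is the rank of item i (and r i = i outside {1..n}).\<close>

definition rankings :: "nat \<Rightarrow> (nat \<Rightarrow> nat) set" where
  "rankings n = {r. r permutes {1..n}}"

definition footrule :: "nat \<Rightarrow> (nat \<Rightarrow> nat) \<Rightarrow> (nat \<Rightarrow> nat) \<Rightarrow> real" where
  "footrule n r \<rho> = (\<Sum>i=1..n. \<bar>real (r i) - real (\<rho> i)\<bar>)"

definition mallows_Z :: "nat \<Rightarrow> (nat \<Rightarrow> nat) \<Rightarrow> real \<Rightarrow> real" where
  "mallows_Z n \<rho>0 \<alpha> = (\<Sum>r\<in>rankings n. exp (- (\<alpha> / real n) * footrule n r \<rho>0))"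

definition mallows :: "nat \<Rightarrow> (nat \<Rightarrow> nat) \<Rightarrow> real \<Rightarrow> (nat \<Rightarrow> nat) pmf" where
  "mallows n \<rho>0 \<alpha> = embed_pmf (\<lambda>r. if r \<in> rankings n
      then exp (- (\<alpha> / real n) * footrule n r \<rho>0) / mallows_Z n \<rho>0 \<alpha> else 0)"

definition rank_vec :: "nat \<Rightarrow> (nat \<Rightarrow> real) \<Rightarrow> nat \<Rightarrow> nat" where
  "rank_vec n x i = card {j\<in>{1..n}. x i - x j \<ge> 0}"

end

theory Submission
  imports Defs "HOL-Probability.Hoeffding"
begin

lemma conc_lemma:
  fixes X :: "nat \<Rightarrow> 'a \<Rightarrow> real"
  assumes P: "prob_space M" and ind: "prob_space.indep_vars M (\<lambda>_. borel) X UNIV"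
    and dist: "\<And>j. distr M borel (X j) = distr M borel (X 0)"
    and bnd: "AE x in M. X 0 x \<in> {a..b}" and ab: "a < b" and d: "\<delta> > 0"
  shows "AE \<omega> in M. eventually (\<lambda>N. \<bar>(1 / real N) * (\<Sum>j=1..N. X j \<omega>) - prob_space.expectation M (X 0)\<bar> < \<delta>) sequentially"
proof -
  interpret prob_space M by (rule P)
  have rv[measurable]: "\<And>j. random_variable borel (X j)" using ind unfolding indep_vars_def by blast
  define \<mu> where "\<mu> = expectation (X 0)"
  define A where "A N = {x\<in>space M. \<bar>(\<Sum>j\<in>{1..N}. X j x) / real (card {1..N}) - \<mu>\<bar> \<ge> \<delta>}" for N
  have Ameas: "A N \<in> sets M" for N unfolding A_def by measurable
  define c where "c = exp (-2 * \<delta>\<^sup>2 / (b - a)\<^sup>2)"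
  have c: "0 < c" "c < 1" using ab d unfolding c_def by auto
  have bound: "prob (A N) \<le> 2 * c ^ N" if N: "N \<ge> 1" for N
  proof -
    have loc: "Hoeffding_ineq_iid M {1..N} X (X 0) a b"
    proof unfold_locales
      show "indep_vars (\<lambda>_. borel) X {1..N}" by (rule indep_vars_subset[OF ind]) auto
    qed (use bnd in \<open>auto intro: dist\<close>)
    note H = Hoeffding_ineq_iid.Hoeffding_ineq_abs_ge'[OF loc]
    have "prob (A N) \<le> 2 * exp (-2 * real (card {1..N}) * \<delta>\<^sup>2 / (b - a)\<^sup>2)"
      unfolding A_def using H[of \<delta>] d ab N by (auto simp: \<mu>_def)
    also have "exp (-2 * real (card {1..N}) * \<delta>\<^sup>2 / (b - a)\<^sup>2) = c ^ N"
      unfolding c_def by (subst exp_of_nat_mult[symmetric]) (simp add: field_simps)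
    finally show ?thesis .
  qed
  have "summable (\<lambda>N. measure M (A N))"
  proof (rule summable_comparison_test')
    show "summable (\<lambda>N. 2 * c ^ N)" using c by (intro summable_mult summable_geometric) auto
    show "norm (measure M (A N)) \<le> 2 * c ^ N" if "N \<ge> 1" for N using bound[OF that] by simp
  qed
  then have "AE x in M. eventually (\<lambda>N. x \<in> space M - A N) sequentially"
    by (intro borel_cantelli_AE1 Ameas) (auto simp: emeasure_eq_measure)
  then show ?thesis
  proof (rule eventually_mono)
    fix x assume "eventually (\<lambda>N. x \<in> space M - A N) sequentially"
    then show "eventually (\<lambda>N. \<bar>(1 / real N) * (\<Sum>j=1..N. X j x) - expectation (X 0)\<bar> < \<delta>) sequentially"
      using eventually_ge_at_top[of 1]
    proof (rule eventually_elim2)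
      fix N :: nat assume "x \<in> space M - A N" "N \<ge> 1"
      then show "\<bar>(1 / real N) * (\<Sum>j=1..N. X j x) - expectation (X 0)\<bar> < \<delta>"
        unfolding A_def \<mu>_def by auto
    qed
  qed
qed

lemma finite_rankings: "finite (rankings n)"
  unfolding rankings_def by (rule finite_permutations) simp

lemma mallows_Z_pos:
  assumes "\<rho>0 \<in> rankings n"
  shows "mallows_Z n \<rho>0 \<alpha> > 0"
proof -
  have "id \<in> rankings n" unfolding rankings_def by (simp add: permutes_id)
  then show ?thesis unfolding mallows_Z_def
    by (intro sum_pos finite_rankings) auto
qed

lemma pmf_mallows:
  assumes "\<rho>0 \<in> rankings n"
  shows "pmf (mallows n \<rho>0 \<alpha>) r = (if r \<in> rankings n
      then exp (- (\<alpha> / real n) * footrule n r \<rho>0) / mallows_Z n \<rho>0 \<alpha> else 0)"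
proof -
  let ?f = "\<lambda>r. if r \<in> rankings n
      then exp (- (\<alpha> / real n) * footrule n r \<rho>0) / mallows_Z n \<rho>0 \<alpha> else 0"
  have Z: "mallows_Z n \<rho>0 \<alpha> > 0" by (rule mallows_Z_pos[OF assms])
  have nn: "\<forall>x. 0 \<le> ?f x" using Z by auto
  have "(\<integral>\<^sup>+x. ennreal (?f x) \<partial>count_space UNIV) = (\<Sum>x\<in>rankings n. ennreal (?f x))"
    by (rule nn_integral_count_space') (auto simp: finite_rankings)
  also have "\<dots> = ennreal (\<Sum>x\<in>rankings n. ?f x)"
    using Z by (intro sum_ennreal) (auto intro: divide_nonneg_pos)
  also have "(\<Sum>x\<in>rankings n. ?f x) = (\<Sum>x\<in>rankings n. exp (- (\<alpha> / real n) * footrule n x \<rho>0)) / mallows_Z n \<rho>0 \<alpha>"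
    by (simp add: sum_divide_distrib)
  also have "\<dots> = 1" using Z unfolding mallows_Z_def by simp
  finally have "(\<integral>\<^sup>+x. ennreal (?f x) \<partial>count_space UNIV) = 1" by simp
  then show ?thesis unfolding mallows_def using nn by (subst pmf_embed_pmf) auto
qed

lemma set_pmf_mallows:
  assumes "\<rho>0 \<in> rankings n"
  shows "set_pmf (mallows n \<rho>0 \<alpha>) \<subseteq> rankings n"
  using pmf_mallows[OF assms] by (auto simp: set_pmf_eq)

lemma expectation_mallows:
  assumes "\<rho>0 \<in> rankings n"
  shows "measure_pmf.expectation (mallows n \<rho>0 \<alpha>) (\<lambda>r. real (r k)) =
    (\<Sum>r\<in>rankings n. exp (- (\<alpha> / real n) * footrule n r \<rho>0) * real (r k)) / mallows_Z n \<rho>0 \<alpha>"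
proof -
  have "measure_pmf.expectation (mallows n \<rho>0 \<alpha>) (\<lambda>r. real (r k)) =
     (\<Sum>r\<in>rankings n. real (r k) * pmf (mallows n \<rho>0 \<alpha>) r)"
    using set_pmf_mallows[OF assms] by (intro integral_measure_pmf_real finite_rankings) auto
  also have "\<dots> = (\<Sum>r\<in>rankings n. exp (- (\<alpha> / real n) * footrule n r \<rho>0) * real (r k)) / mallows_Z n \<rho>0 \<alpha>"
    unfolding sum_divide_distrib by (intro sum.cong refl) (simp add: pmf_mallows[OF assms])
  finally show ?thesis .
qed

lemma footrule_swap:
  assumes "a \<in> {1..n}" "b \<in> {1..n}" "a \<noteq> b"
  shows "footrule n r \<rho> - footrule n (r \<circ> Transposition.transpose a b) \<rho> =
    \<bar>real (r a) - real (\<rho> a)\<bar> + \<bar>real (r b) - real (\<rho> b)\<bar>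
    - \<bar>real (r b) - real (\<rho> a)\<bar> - \<bar>real (r a) - real (\<rho> b)\<bar>"
proof -
  let ?h = "\<lambda>i. \<bar>real (r i) - real (\<rho> i)\<bar> - \<bar>real ((r \<circ> Transposition.transpose a b) i) - real (\<rho> i)\<bar>"
  have "footrule n r \<rho> - footrule n (r \<circ> Transposition.transpose a b) \<rho> = (\<Sum>i=1..n. ?h i)"
    unfolding footrule_def by (simp add: sum_subtractf)
  also have "\<dots> = (\<Sum>i\<in>{a,b}. ?h i)"
    using assms by (intro sum.mono_neutral_right) auto
  also have "\<dots> = ?h a + ?h b" using assms by simp
  finally show ?thesis using assms by simp
qed

lemma swap_ineq:
  fixes x y p q :: real
  assumes "p < q"
  shows "(x - y) * (\<bar>x - p\<bar> + \<bar>y - q\<bar> - \<bar>y - p\<bar> - \<bar>x - q\<bar>) \<ge> 0"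
proof (cases "x \<ge> y")
  case True
  then have "\<bar>x - p\<bar> + \<bar>y - q\<bar> - \<bar>y - p\<bar> - \<bar>x - q\<bar> \<ge> 0" using assms by linarith
  then show ?thesis using True by simp
next
  case False
  then have "\<bar>x - p\<bar> + \<bar>y - q\<bar> - \<bar>y - p\<bar> - \<bar>x - q\<bar> \<le> 0" using assms by linarith
  then show ?thesis using False by (simp add: mult_nonpos_nonpos)
qed

lemma weighted_diff_neg:
  assumes r0: "\<rho>0 \<in> rankings n" and \<alpha>: "\<alpha> > 0" and n: "n \<ge> 1"
    and a: "a \<in> {1..n}" and b: "b \<in> {1..n}" and ab: "\<rho>0 a < \<rho>0 b"
  shows "(\<Sum>r\<in>rankings n. exp (- (\<alpha> / real n) * footrule n r \<rho>0) * (real (r a) - real (r b))) < 0"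
proof -
  define w where "w r = exp (- (\<alpha> / real n) * footrule n r \<rho>0)" for r
  define \<sigma> where "\<sigma> r = r \<circ> Transposition.transpose a b" for r :: "nat \<Rightarrow> nat"
  have anb: "a \<noteq> b" using ab by auto
  have \<sigma>\<sigma>: "\<sigma> (\<sigma> r) = r" for r unfolding \<sigma>_def by (auto simp: fun_eq_iff Transposition.transpose_def)
  have \<sigma>R: "\<sigma> r \<in> rankings n" if "r \<in> rankings n" for r
    using that a b unfolding \<sigma>_def rankings_def mem_Collect_eq by (intro permutes_compose permutes_swap_id) auto
  have \<sigma>a: "\<sigma> r a = r b" and \<sigma>b: "\<sigma> r b = r a" for r unfolding \<sigma>_def by (auto simp: Transposition.transpose_def)
  define D where "D r = \<bar>real (r a) - real (\<rho>0 a)\<bar> + \<bar>real (r b) - real (\<rho>0 b)\<bar>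
    - \<bar>real (r b) - real (\<rho>0 a)\<bar> - \<bar>real (r a) - real (\<rho>0 b)\<bar>" for r :: "nat \<Rightarrow> nat"
  have FD: "footrule n (\<sigma> r) \<rho>0 = footrule n r \<rho>0 - D r" for r
    using footrule_swap[OF a b anb, of r \<rho>0] unfolding \<sigma>_def D_def by simp
  define g where "g r = w r * (real (r a) - real (r b))" for r
  let ?S = "\<Sum>r\<in>rankings n. g r"
  have "?S = (\<Sum>r\<in>rankings n. g (\<sigma> r))"
    by (rule sum.reindex_bij_witness[where i=\<sigma> and j=\<sigma>]) (auto simp: \<sigma>\<sigma> \<sigma>R)
  then have "2 * ?S = (\<Sum>r\<in>rankings n. g r + g (\<sigma> r))" by (simp add: sum.distrib)
  also have "\<dots> = (\<Sum>r\<in>rankings n. (w r - w (\<sigma> r)) * (real (r a) - real (r b)))"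
    unfolding g_def \<sigma>a \<sigma>b by (intro sum.cong refl) (simp add: algebra_simps)
  also have "\<dots> < (\<Sum>r\<in>rankings n. 0)"
  proof (rule sum_strict_mono_ex1[OF finite_rankings])
    have c: "\<alpha> / real n > 0" using \<alpha> n by auto
    show "\<forall>r\<in>rankings n. (w r - w (\<sigma> r)) * (real (r a) - real (r b)) \<le> 0"
    proof
      fix r
      have si: "(real (r a) - real (r b)) * D r \<ge> 0"
        unfolding D_def by (rule swap_ineq) (use ab in simp)
      show "(w r - w (\<sigma> r)) * (real (r a) - real (r b)) \<le> 0"
      proof (cases "D r \<ge> 0")
        case True
        then have "w r \<le> w (\<sigma> r)" unfolding w_def FD using c
          by (simp add: \<alpha> n divide_right_mono mult_left_mono)
        moreover have "real (r a) - real (r b) \<ge> 0 \<or> D r = 0" using si True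
          by (metis mult_eq_0_iff mult_le_0_iff not_le order.strict_iff_order zero_le_mult_iff)
        moreover have "D r = 0 \<Longrightarrow> w r = w (\<sigma> r)" unfolding w_def FD by simp
        ultimately show ?thesis by (auto simp: mult_nonpos_nonneg)
      next
        case False
        then have "w r \<ge> w (\<sigma> r)" unfolding w_def FD using c
          by (simp add: \<alpha> n divide_right_mono mult_left_mono)
        moreover have "real (r a) - real (r b) \<le> 0" using si False
          by (simp add: zero_le_mult_iff)
        ultimately show ?thesis by (simp add: mult_nonneg_nonpos)
      qed
    qed
    define r0 where "r0 = \<sigma> \<rho>0"
    have "r0 \<in> rankings n" unfolding r0_def by (rule \<sigma>R[OF r0])
    moreover have "(w r0 - w (\<sigma> r0)) * (real (r0 a) - real (r0 b)) < 0"
    proof -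
      have "D r0 > 0" unfolding D_def r0_def \<sigma>a \<sigma>b using ab by simp
      then have "w r0 < w (\<sigma> r0)" unfolding w_def FD using c \<alpha> n by (simp add: divide_strict_right_mono)
      moreover have "real (r0 a) - real (r0 b) > 0" unfolding r0_def \<sigma>a \<sigma>b using ab by simp
      ultimately show ?thesis by (simp add: mult_neg_pos)
    qed
    ultimately show "\<exists>r\<in>rankings n. (w r - w (\<sigma> r)) * (real (r a) - real (r b)) < 0" by blast
  qed
  finally show ?thesis unfolding g_def w_def by simp
qed

lemma E_strict:
  assumes r0: "\<rho>0 \<in> rankings n" and \<alpha>: "\<alpha> > 0" and n: "n \<ge> 1"
    and a: "a \<in> {1..n}" and b: "b \<in> {1..n}" and ab: "\<rho>0 a < \<rho>0 b"
  shows "measure_pmf.expectation (mallows n \<rho>0 \<alpha>) (\<lambda>r. real (r a))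
       < measure_pmf.expectation (mallows n \<rho>0 \<alpha>) (\<lambda>r. real (r b))"
proof -
  have Z: "mallows_Z n \<rho>0 \<alpha> > 0" by (rule mallows_Z_pos[OF r0])
  have "measure_pmf.expectation (mallows n \<rho>0 \<alpha>) (\<lambda>r. real (r a))
       - measure_pmf.expectation (mallows n \<rho>0 \<alpha>) (\<lambda>r. real (r b))
     = (\<Sum>r\<in>rankings n. exp (- (\<alpha> / real n) * footrule n r \<rho>0) * (real (r a) - real (r b))) / mallows_Z n \<rho>0 \<alpha>"
    unfolding expectation_mallows[OF r0] by (simp add: diff_divide_distrib sum_subtractf right_diff_distrib)
  also have "\<dots> < 0" using weighted_diff_neg[OF r0 \<alpha> n a b ab] Z by (simp add: divide_neg_pos)
  finally show ?thesis by simp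
qed

lemma rank_E:
  assumes r0: "\<rho>0 \<in> rankings n" and i: "i \<in> {1..n}"
    and mono: "\<And>a b. a \<in> {1..n} \<Longrightarrow> b \<in> {1..n} \<Longrightarrow> \<rho>0 a < \<rho>0 b \<Longrightarrow> E a < (E b :: real)"
  shows "rank_vec n E i = \<rho>0 i"
proof -
  have p: "\<rho>0 permutes {1..n}" using r0 unfolding rankings_def by simp
  have inj: "inj_on \<rho>0 {1..n}" using permutes_inj_on[OF p] .
  have img: "\<rho>0 ` {1..n} = {1..n}" using permutes_image[OF p] .
  have seteq: "{j\<in>{1..n}. E i - E j \<ge> 0} = {j\<in>{1..n}. \<rho>0 j \<le> \<rho>0 i}"
  proof (intro Collect_cong conj_cong refl)
    fix j assume j: "j \<in> {1..n}"
    show "(E i - E j \<ge> 0) = (\<rho>0 j \<le> \<rho>0 i)"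
    proof (cases "\<rho>0 j = \<rho>0 i")
      case True
      then have "j = i" using inj i j by (auto dest: inj_onD)
      then show ?thesis by simp
    next
      case False
      then show ?thesis using mono[OF i j] mono[OF j i] by (cases "\<rho>0 j < \<rho>0 i") auto
    qed
  qed
  have "rank_vec n E i = card {j\<in>{1..n}. \<rho>0 j \<le> \<rho>0 i}" unfolding rank_vec_def seteq ..
  also have "\<dots> = card (\<rho>0 ` {j\<in>{1..n}. \<rho>0 j \<le> \<rho>0 i})"
    by (rule card_image[symmetric]) (rule inj_on_subset[OF inj], auto)
  also have "\<rho>0 ` {j\<in>{1..n}. \<rho>0 j \<le> \<rho>0 i} = {1..\<rho>0 i}"
  proof -
    have ri: "\<rho>0 i \<in> {1..n}" using img i by auto
    show ?thesis
    proof (intro equalityI subsetI)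
      fix x assume "x \<in> \<rho>0 ` {j\<in>{1..n}. \<rho>0 j \<le> \<rho>0 i}"
      then obtain j where j: "j \<in> {1..n}" "\<rho>0 j \<le> \<rho>0 i" "x = \<rho>0 j" by auto
      have "\<rho>0 j \<in> {1..n}" using img j(1) by blast
      then show "x \<in> {1..\<rho>0 i}" using j by auto
    next
      fix x assume x: "x \<in> {1..\<rho>0 i}"
      then have "x \<in> \<rho>0 ` {1..n}" using img ri by auto
      then obtain y where "y \<in> {1..n}" "x = \<rho>0 y" by auto
      then show "x \<in> \<rho>0 ` {j\<in>{1..n}. \<rho>0 j \<le> \<rho>0 i}" using x by auto
    qed
  qed
  finally show ?thesis by simp
qed

theorem theorem2:
  fixes M :: "'a measure" and n :: nat and \<rho>0 :: "nat \<Rightarrow> nat" and \<alpha> :: real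
    and R :: "nat \<Rightarrow> 'a \<Rightarrow> (nat \<Rightarrow> nat)"
  assumes "prob_space M"
    and "n \<ge> 2"
    and "\<rho>0 \<in> rankings n"
    and "\<alpha> > 0"
    and "\<And>j. R j \<in> M \<rightarrow>\<^sub>M count_space UNIV"
    and "prob_space.indep_vars M (\<lambda>_. count_space UNIV) R UNIV"
    and "\<And>j. distr M (count_space UNIV) (R j) = measure_pmf (mallows n \<rho>0 \<alpha>)"
  shows "(\<forall>i\<in>{1..n}. rank_vec n (\<lambda>k. measure_pmf.expectation (mallows n \<rho>0 \<alpha>) (\<lambda>r. real (r k))) i = \<rho>0 i)
       \<and> (AE \<omega> in M. eventually (\<lambda>N.
            \<forall>i\<in>{1..n}. rank_vec n (\<lambda>i. (1 / real N) * (\<Sum>j=1..N. real (R j \<omega> i))) i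
              = rank_vec n (\<lambda>i. measure_pmf.expectation (mallows n \<rho>0 \<alpha>) (\<lambda>r. real (r i))) i)
          sequentially)"
proof -
  note P = assms(1) and n2 = assms(2) and r0 = assms(3) and \<alpha> = assms(4)
    and Rm = assms(5) and ind = assms(6) and dist = assms(7)
  interpret prob_space M by (rule P)
  define E where "E k = measure_pmf.expectation (mallows n \<rho>0 \<alpha>) (\<lambda>r. real (r k))" for k
  have n1: "n \<ge> 1" using n2 by simp
  have mono: "\<And>a b. a \<in> {1..n} \<Longrightarrow> b \<in> {1..n} \<Longrightarrow> \<rho>0 a < \<rho>0 b \<Longrightarrow> E a < E b"
    unfolding E_def by (rule E_strict[OF r0 \<alpha> n1])
  have part1: "\<forall>i\<in>{1..n}. rank_vec n E i = \<rho>0 i"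
  proof
    fix i assume "i \<in> {1..n}"
    then show "rank_vec n E i = \<rho>0 i" by (rule rank_E[OF r0 _ mono])
  qed
  have p: "\<rho>0 permutes {1..n}" using r0 unfolding rankings_def by simp
  have inj: "inj_on \<rho>0 {1..n}" using permutes_inj_on[OF p] .
  have Eneq: "E i \<noteq> E j" if "i \<in> {1..n}" "j \<in> {1..n}" "i \<noteq> j" for i j
  proof -
    have "\<rho>0 i \<noteq> \<rho>0 j" using inj that by (auto dest: inj_onD)
    then show ?thesis using mono[OF that(1,2)] mono[OF that(2,1)] by (cases "\<rho>0 i < \<rho>0 j") auto
  qed
  define Pairs where "Pairs = {(i,j). i \<in> {1..n} \<and> j \<in> {1..n} \<and> i \<noteq> j}"
  define S where "S = (\<lambda>(i,j). \<bar>E i - E j\<bar>) ` Pairs"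
  have finP: "finite Pairs" unfolding Pairs_def
    by (rule finite_subset[of _ "{1..n} \<times> {1..n}"]) auto
  have "(1,2) \<in> Pairs" unfolding Pairs_def using n2 by auto
  then have Sne: "S \<noteq> {}" unfolding S_def by auto
  have finS: "finite S" unfolding S_def using finP by simp
  have Spos: "\<forall>s\<in>S. s > 0" unfolding S_def Pairs_def using Eneq by auto
  define \<delta> where "\<delta> = Min S / 2"
  have \<delta>: "\<delta> > 0" unfolding \<delta>_def using Spos finS Sne by simp
  have gap: "\<bar>E i - E j\<bar> \<ge> 2 * \<delta>" if "i \<in> {1..n}" "j \<in> {1..n}" "i \<noteq> j" for i j
  proof -
    have "\<bar>E i - E j\<bar> \<in> S" unfolding S_def Pairs_def using that by force
    then show ?thesis unfolding \<delta>_def using finS by simp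
  qed
  have conv: "AE \<omega> in M. eventually (\<lambda>N. \<bar>(1 / real N) * (\<Sum>j=1..N. real (R j \<omega> k)) - E k\<bar> < \<delta>) sequentially"
    if k: "k \<in> {1..n}" for k
  proof -
    define X where "X j \<omega> = real (R j \<omega> k)" for j \<omega>
    have meas: "(\<lambda>r::nat\<Rightarrow>nat. real (r k)) \<in> measurable (count_space UNIV) borel" by simp
    have indX: "indep_vars (\<lambda>_. borel) X UNIV"
      unfolding X_def by (rule indep_vars_compose2[OF ind]) simp
    have dX: "distr M borel (X j) = distr (measure_pmf (mallows n \<rho>0 \<alpha>)) borel (\<lambda>r. real (r k))" for j
    proof -
      have "distr M borel (X j) = distr (distr M (count_space UNIV) (R j)) borel (\<lambda>r. real (r k))"
        unfolding X_def by (subst distr_distr[OF meas Rm]) (simp add: comp_def)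
      then show ?thesis by (simp add: dist)
    qed
    have bnd: "AE x in M. X 0 x \<in> {0..real n}"
    proof -
      have "AE r in measure_pmf (mallows n \<rho>0 \<alpha>). real (r k) \<in> {0..real n}"
        unfolding AE_measure_pmf_iff
      proof
        fix r assume "r \<in> set_pmf (mallows n \<rho>0 \<alpha>)"
        then have "r permutes {1..n}" using set_pmf_mallows[OF r0] unfolding rankings_def by auto
        then have "r k \<in> {1..n}" using k by (simp only: permutes_in_image)
        then show "real (r k) \<in> {0..real n}" by simp
      qed
      then have "AE r in distr M (count_space UNIV) (R 0). real (r k) \<in> {0..real n}"
        unfolding dist[of 0] .
      then show ?thesis unfolding X_def by (subst (asm) AE_distr_iff[OF Rm]) auto
    qed
    have EX: "expectation (X 0) = E k"
    proof -
      have "expectation (X 0) = integral\<^sup>L (distr M (count_space UNIV) (R 0)) (\<lambda>r. real (r k))"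
        unfolding X_def by (subst integral_distr[OF Rm]) auto
      then show ?thesis unfolding E_def by (simp add: dist)
    qed
    have "AE \<omega> in M. eventually (\<lambda>N. \<bar>(1 / real N) * (\<Sum>j=1..N. X j \<omega>) - expectation (X 0)\<bar> < \<delta>) sequentially"
      by (rule conc_lemma[OF P indX _ bnd _ \<delta>]) (use n1 in \<open>auto simp: dX\<close>)
    then show ?thesis unfolding EX X_def .
  qed
  have "AE \<omega> in M. \<forall>k\<in>{1..n}. eventually (\<lambda>N. \<bar>(1 / real N) * (\<Sum>j=1..N. real (R j \<omega> k)) - E k\<bar> < \<delta>) sequentially"
    by (rule AE_finite_allI) (simp, rule conv)
  then have part2: "AE \<omega> in M. eventually (\<lambda>N. \<forall>i\<in>{1..n}.
      rank_vec n (\<lambda>i. (1 / real N) * (\<Sum>j=1..N. real (R j \<omega> i))) i = rank_vec n E i) sequentially"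
  proof (rule eventually_mono)
    fix \<omega>
    assume "\<forall>k\<in>{1..n}. eventually (\<lambda>N. \<bar>(1 / real N) * (\<Sum>j=1..N. real (R j \<omega> k)) - E k\<bar> < \<delta>) sequentially"
    then have "eventually (\<lambda>N. \<forall>k\<in>{1..n}. \<bar>(1 / real N) * (\<Sum>j=1..N. real (R j \<omega> k)) - E k\<bar> < \<delta>) sequentially"
      by (intro eventually_ball_finite) auto
    then show "eventually (\<lambda>N. \<forall>i\<in>{1..n}.
      rank_vec n (\<lambda>i. (1 / real N) * (\<Sum>j=1..N. real (R j \<omega> i))) i = rank_vec n E i) sequentially"
    proof (rule eventually_mono)
      fix N
      define m where "m k = (1 / real N) * (\<Sum>j=1..N. real (R j \<omega> k))" for k
      assume close: "\<forall>k\<in>{1..n}. \<bar>(1 / real N) * (\<Sum>j=1..N. real (R j \<omega> k)) - E k\<bar> < \<delta>"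
      have "rank_vec n m i = rank_vec n E i" if i: "i \<in> {1..n}" for i
      proof -
        have "{j\<in>{1..n}. m i - m j \<ge> 0} = {j\<in>{1..n}. E i - E j \<ge> 0}"
        proof (intro Collect_cong conj_cong refl)
          fix j assume j: "j \<in> {1..n}"
          show "(m i - m j \<ge> 0) = (E i - E j \<ge> 0)"
          proof (cases "i = j")
            case False
            have "\<bar>E i - E j\<bar> \<ge> 2 * \<delta>" by (rule gap[OF i j False])
            moreover have "\<bar>m i - E i\<bar> < \<delta>" "\<bar>m j - E j\<bar> < \<delta>"
              using close i j unfolding m_def by auto
            ultimately show ?thesis by linarith
          qed simp
        qed
        then show ?thesis unfolding rank_vec_def by simp
      qed
      then show "\<forall>i\<in>{1..n}. rank_vec n (\<lambda>i. (1 / real N) * (\<Sum>j=1..N. real (R j \<omega> i))) i = rank_vec n E i"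
        unfolding m_def by blast
    qed
  qed
  show ?thesis using part1 part2 unfolding E_def by blast
qed

thm_deps theorem2

end
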